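(* Let $n\geq 2$. If $A$ is an $L_n$-good $n\times n$ matrix, then no column of $A$ has entries equal to $1$ in both the first row and the last row.
   Context: For $n\geq 2$, $L_n$ is the set of vectors $\vec{x}=(x_1,\ldots,x_n)\in\mathbb{Z}_2^n$ with no $i\in\{1,\ldots,n-1\}$ such that $x_i=x_{i+1}=1$, and with not both $x_1=1$ and $x_n=1$. An $n\times n$ matrix $A$ over $\mathbb{Z}_2$ is $L_n$-good if it is invertible and $A\vec{x}\in L_n$ for all $\vec{x}\in L_n$. *)

theory Defs
  imports "HOL-Library.Z2" "Jordan_Normal_Form.Matrix"
begin

text \<open>Indices are 0-based: entry x_i of the paper is v $ (i-1).
  L_n: vectors in Z_2^n with no two cyclically consecutive ones.\<close>
definition L :: "nat \<Rightarrow> bit vec set" where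
  "L n = {v \<in> carrier_vec n.
      (\<not> (\<exists>i. i + 1 < n \<and> v $ i = 1 \<and> v $ (i + 1) = 1)) \<and>
      \<not> (v $ 0 = 1 \<and> v $ (n - 1) = 1)}"

definition L_good :: "nat \<Rightarrow> bit mat \<Rightarrow> bool" where
  "L_good n A \<longleftrightarrow> A \<in> carrier_mat n n \<and> invertible_mat A \<and>
      (\<forall>x \<in> L n. A *\<^sub>v x \<in> L n)"

end

theory Submission
  imports Defs
begin

theorem lemma3:
  fixes n :: nat and A :: "bit mat"
  assumes "n \<ge> 2" and "L_good n A"
  shows "\<forall>j < n. \<not> (A $$ (0, j) = 1 \<and> A $$ (n - 1, j) = 1)"
proof (intro allI impI)
  fix j assume j: "j < n"
  have A: "A \<in> carrier_mat n n" and H: "\<forall>x \<in> L n. A *\<^sub>v x \<in> L n"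
    using assms(2) unfolding L_good_def by auto
  let ?e = "unit_vec n j :: bit vec"
  have "?e \<in> L n"
    unfolding L_def using j assms(1)
    by (auto simp: unit_vec_def)
  hence "A *\<^sub>v ?e \<in> L n" using H by blast
  moreover have "(A *\<^sub>v ?e) $ i = A $$ (i, j)" if "i < n" for i
    using that j A by (simp add: scalar_prod_right_unit)
  ultimately show "\<not> (A $$ (0, j) = 1 \<and> A $$ (n - 1, j) = 1)"
    unfolding L_def using assms(1) by auto
qed

end
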